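(* Let $0<a<1$ be a constant and let $k_1\ge k_2\ge\cdots\ge k_n$ and $\ell_1\ge\ell_2\ge\cdots\ge\ell_n$ be non-negative integers such that $\sum_{i=1}^j k_i\le\sum_{i=1}^j\ell_i$ for every $j\le n$ and $\sum_{i=1}^n k_i=\sum_{i=1}^n\ell_i$. Let $X=\sum_{i=1}^n X_i$ and $Y=\sum_{i=1}^n Y_i$, where $X_1,\dots,X_n$ are independent indicator random variables with $\Pr[X_i=1]=a^{k_i}$ and $Y_1,\dots,Y_n$ are independent indicator random variables with $\Pr[Y_i=1]=a^{\ell_i}$. Then for every integer $M$, $\Pr[X\ge M]\le\Pr[Y\ge M]$. *)

theory Defs
  imports "HOL-Probability.Probability"
begin

definition indicator_vector :: "real \<Rightarrow> (nat \<Rightarrow> nat) \<Rightarrow> nat \<Rightarrow> (nat \<Rightarrow> bool) pmf" where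
  "indicator_vector a k n = Pi_pmf {1..n} False (\<lambda>i. bernoulli_pmf (a ^ k i))"

definition sum_tail_prob :: "real \<Rightarrow> (nat \<Rightarrow> nat) \<Rightarrow> nat \<Rightarrow> int \<Rightarrow> real" where
  "sum_tail_prob a k n M =
     measure_pmf.prob (indicator_vector a k n)
       {\<omega>. M \<le> (\<Sum>i=1..n. of_bool (\<omega> i) :: int)}"

end

theory Submission
  imports Defs
begin

definition TT :: "nat set \<Rightarrow> (nat \<Rightarrow> real) \<Rightarrow> int \<Rightarrow> real" where
  "TT A p M = measure_pmf.prob (Pi_pmf A False (\<lambda>i. bernoulli_pmf (p i)))
       {\<omega>. M \<le> (\<Sum>i\<in>A. of_bool (\<omega> i) :: int)}"

lemma ennreal_aux:
  fixes u v p :: real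
  assumes "0 \<le> u" "0 \<le> v" "0 \<le> p" "p \<le> 1"
  shows "ennreal u * ennreal p + ennreal v * ennreal (1 - p) = ennreal (u * p + v * (1 - p))"
  using assms by (simp add: ennreal_plus ennreal_mult)

lemma TT_insert:
  assumes "finite A" "x \<notin> A" "0 \<le> p x" "p x \<le> 1"
  shows "TT (insert x A) p M = p x * TT A p (M - 1) + (1 - p x) * TT A p M"
proof -
  let ?P = "Pi_pmf A False (\<lambda>i. bernoulli_pmf (p i))"
  let ?S = "{\<omega>. M \<le> (\<Sum>i\<in>insert x A. of_bool (\<omega> i) :: int)}"
  have pi: "Pi_pmf (insert x A) False (\<lambda>i. bernoulli_pmf (p i)) =
     bernoulli_pmf (p x) \<bind> (\<lambda>y. map_pmf (\<lambda>f. f(x := y)) ?P)"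
    using assms by (simp add: Pi_pmf_insert' map_pmf_def)
  have pre: "(\<lambda>f. f(x := y)) -` ?S = {\<omega>. M - of_bool y \<le> (\<Sum>i\<in>A. of_bool (\<omega> i) :: int)}" for y
  proof -
    have cg: "(\<Sum>i\<in>A. of_bool ((f(x:=y)) i) :: int) = (\<Sum>i\<in>A. of_bool (f i))" for f
      using assms(2) by (intro sum.cong) auto
    then have "(\<Sum>i\<in>insert x A. of_bool ((f(x:=y)) i) :: int) = of_bool y + (\<Sum>i\<in>A. of_bool (f i))" for f
      by (subst sum.insert[OF assms(1,2)]) (metis fun_upd_same cg)
    then show ?thesis by auto
  qed
  let ?N = "\<lambda>y. map_pmf (\<lambda>f. f(x := y)) ?P"
  let ?m = "\<lambda>y. measure_pmf.prob ?P {\<omega>. M - of_bool y \<le> (\<Sum>i\<in>A. of_bool (\<omega> i) :: int)}"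
  have mN: "measure_pmf.prob (?N y) ?S = ?m y" for y
    unfolding measure_map_pmf pre ..
  have "ennreal (TT (insert x A) p M) = emeasure (measure_pmf (bernoulli_pmf (p x) \<bind> ?N)) ?S"
    unfolding TT_def pi by (simp add: measure_pmf.emeasure_eq_measure)
  also have "\<dots> = (\<integral>\<^sup>+y. emeasure (measure_pmf (?N y)) ?S \<partial>bernoulli_pmf (p x))"
    by simp
  also have "\<dots> = ennreal (?m True) * ennreal (p x) + ennreal (?m False) * ennreal (1 - p x)"
    unfolding measure_pmf.emeasure_eq_measure mN by (rule nn_integral_bernoulli_pmf[OF assms(3,4)]) simp
  also have "\<dots> = ennreal (?m True * p x + ?m False * (1 - p x))"
    using assms by (intro ennreal_aux) auto
  finally have "TT (insert x A) p M = ?m True * p x + ?m False * (1 - p x)"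
    using assms by (subst (asm) ennreal_inj) (auto simp: TT_def)
  also have "\<dots> = p x * TT A p (M - 1) + (1 - p x) * TT A p M"
    by (simp add: TT_def)
  finally show ?thesis .
qed

lemma TT_mono: "TT A p M \<le> TT A p (M - 1)"
  unfolding TT_def by (rule measure_pmf.finite_measure_mono) auto

lemma TT_cong: "(\<And>i. i \<in> A \<Longrightarrow> p i = q i) \<Longrightarrow> TT A p M = TT A q M"
  unfolding TT_def by (subst Pi_pmf_cong[where f' = "\<lambda>i. bernoulli_pmf (q i)"]) auto

lemma pair_ineq:
  fixes u v w pi pj qi qj :: real
  assumes "w \<le> v" "v \<le> u" "pi * pj = qi * qj" "pi + pj \<le> qi + qj"
  shows "pi * (pj * u + (1 - pj) * v) + (1 - pi) * (pj * v + (1 - pj) * w)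
       \<le> qi * (qj * u + (1 - qj) * v) + (1 - qi) * (qj * v + (1 - qj) * w)"
proof -
  have e: "\<And>a b. a * (b * u + (1 - b) * v) + (1 - a) * (b * v + (1 - b) * w)
     = w + (a + b) * (v - w) + (a * b) * (u - 2 * v + w)"
    by (simp add: algebra_simps)
  have "(pi + pj) * (v - w) \<le> (qi + qj) * (v - w)"
    using assms by (intro mult_right_mono) auto
  then show ?thesis unfolding e assms(3) by linarith
qed

lemma TT_pair_le:
  assumes "finite B" "i \<noteq> j" "i \<notin> B" "j \<notin> B"
    and "0 \<le> p i" "p i \<le> 1" "0 \<le> p j" "p j \<le> 1"
    and "0 \<le> q i" "q i \<le> 1" "0 \<le> q j" "q j \<le> 1"
    and "\<And>x. x \<in> B \<Longrightarrow> p x = q x"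
    and "p i * p j = q i * q j" "p i + p j \<le> q i + q j"
  shows "TT (insert i (insert j B)) p M \<le> TT (insert i (insert j B)) q M"
proof -
  have c: "TT B p N = TT B q N" for N using assms(13) by (rule TT_cong)
  have "TT (insert i (insert j B)) p M =
     p i * (p j * TT B q (M - 1 - 1) + (1 - p j) * TT B q (M - 1)) + (1 - p i) * (p j * TT B q (M - 1) + (1 - p j) * TT B q M)"
    using assms by (simp add: TT_insert c)
  also have "\<dots> \<le> q i * (q j * TT B q (M - 1 - 1) + (1 - q j) * TT B q (M - 1)) + (1 - q i) * (q j * TT B q (M - 1) + (1 - q j) * TT B q M)"
    using TT_mono[of B q "M - 1"] TT_mono[of B q M] assms by (intro pair_ineq) auto
  also have "\<dots> = TT (insert i (insert j B)) q M"
    using assms by (simp add: TT_insert)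
  finally show ?thesis .
qed

lemma transfer_le:
  fixes a :: real
  assumes a: "0 < a" "a < 1" and ij: "i \<in> {1..n}" "j \<in> {1..n}" "i \<noteq> j"
    and kj: "1 \<le> k j" "k j \<le> k i + 1"
  shows "TT {1..n} (\<lambda>r. a ^ k r) M \<le> TT {1..n} (\<lambda>r. a ^ (k(i := k i + 1, j := k j - 1)) r) M"
proof -
  define B where "B = {1..n} - {i, j}"
  have AB: "{1..n} = insert i (insert j B)" using ij unfolding B_def by auto
  obtain t where t: "k j = Suc t" using kj by (cases "k j") auto
  have ts: "t \<le> k i" using kj t by simp
  have pw: "a ^ k i \<le> a ^ t" using a ts by (intro power_decreasing) auto
  have "(1 - a) * a ^ k i \<le> (1 - a) * a ^ t" using pw a by (intro mult_left_mono) auto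
  then have sm: "a ^ k i + a ^ Suc t \<le> a ^ Suc (k i) + a ^ t"
    by (simp add: algebra_simps)
  show ?thesis unfolding AB
  proof (rule TT_pair_le)
    show "finite B" unfolding B_def by auto
  qed (use a ij t sm power_le_one[of a "Suc t"] power_le_one[of a "Suc (k i)"] in \<open>auto simp: B_def power_le_one less_imp_le algebra_simps\<close>)
qed


definition PS :: "(nat \<Rightarrow> nat) \<Rightarrow> nat \<Rightarrow> int" where
  "PS k m = (\<Sum>r=1..m. int (k r))"

lemma PS_0[simp]: "PS k 0 = 0" by (simp add: PS_def)
lemma PS_Suc[simp]: "PS k (Suc m) = PS k m + int (k (Suc m))" by (simp add: PS_def)

lemma PS_upd:
  assumes "1 \<le> i" "1 \<le> j" "i \<noteq> j" "1 \<le> k j"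
  shows "PS (k(i := k i + 1, j := k j - 1)) m = PS k m + of_bool (i \<le> m) - of_bool (j \<le> m)"
  using assms by (induction m) (auto simp: le_Suc_eq of_nat_diff)

definition Dist :: "(nat \<Rightarrow> nat) \<Rightarrow> nat \<Rightarrow> (nat \<Rightarrow> nat) \<Rightarrow> nat" where
  "Dist l n k = (\<Sum>m=1..n. nat (PS l m - PS k m))"

lemma step:
  assumes sk: "\<And>i j. 1 \<le> i \<Longrightarrow> i \<le> j \<Longrightarrow> j \<le> n \<Longrightarrow> k j \<le> k i"
    and sl: "\<And>i j. 1 \<le> i \<Longrightarrow> i \<le> j \<Longrightarrow> j \<le> n \<Longrightarrow> l j \<le> l i"
    and E: "\<And>m. m \<le> n \<Longrightarrow> PS k m \<le> PS l m"
    and En: "PS k n = PS l n"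
    and ne: "\<exists>r\<in>{1..n}. k r \<noteq> l r"
  obtains i j where "1 \<le> i" "i < j" "j \<le> n" "1 \<le> k j" "k j \<le> k i"
    "\<And>r s. 1 \<le> r \<Longrightarrow> r \<le> s \<Longrightarrow> s \<le> n \<Longrightarrow>
        (k(i := k i + 1, j := k j - 1)) s \<le> (k(i := k i + 1, j := k j - 1)) r"
    "\<And>m. m \<le> n \<Longrightarrow> PS (k(i := k i + 1, j := k j - 1)) m \<le> PS l m"
    "PS (k(i := k i + 1, j := k j - 1)) n = PS l n"
    "Dist l n (k(i := k i + 1, j := k j - 1)) < Dist l n k"
proof -
  define i where "i = (LEAST r. 1 \<le> r \<and> r \<le> n \<and> k r \<noteq> l r)"
  from ne obtain r0 where r0: "1 \<le> r0 \<and> r0 \<le> n \<and> k r0 \<noteq> l r0" by auto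
  have iP: "1 \<le> i \<and> i \<le> n \<and> k i \<noteq> l i"
    unfolding i_def by (rule LeastI[of _ r0]) (use r0 in auto)
  have below: "k r = l r" if "1 \<le> r" "r < i" for r
    using not_less_Least[of r "\<lambda>r. 1 \<le> r \<and> r \<le> n \<and> k r \<noteq> l r"] that iP
    unfolding i_def[symmetric] by auto
  have eqbelow: "m < i \<longrightarrow> PS k m = PS l m" for m
    by (induction m) (auto simp: below)
  obtain i0 where i0: "i = Suc i0" using iP by (cases i) auto
  have "PS k i \<le> PS l i" using E iP by auto
  then have kli: "k i < l i" using eqbelow[of i0] iP unfolding i0 by auto
  have G: "(\<forall>r. i < r \<and> r \<le> m \<longrightarrow> k r \<le> l r) \<longrightarrow> 1 \<le> PS l m - PS k m" if "i \<le> m" for m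
    using that
  proof (induction m rule: dec_induct)
    case base
    then show ?case using eqbelow[of i0] kli unfolding i0 by auto
  next
    case (step m)
    show ?case
    proof
      assume a: "\<forall>r. i < r \<and> r \<le> Suc m \<longrightarrow> k r \<le> l r"
      then have "k (Suc m) \<le> l (Suc m)" using step by auto
      moreover have "1 \<le> PS l m - PS k m" using step a by auto
      ultimately show "1 \<le> PS l (Suc m) - PS k (Suc m)" by simp
    qed
  qed
  have exj: "\<exists>r. i < r \<and> r \<le> n \<and> l r < k r"
  proof (rule ccontr)
    assume "\<not> ?thesis"
    then have "1 \<le> PS l n - PS k n" using G[of n] iP by force
    then show False using En by simp
  qed
  define j where "j = (LEAST r. i < r \<and> r \<le> n \<and> l r < k r)"
  have jP: "i < j \<and> j \<le> n \<and> l j < k j"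
    unfolding j_def using exj by (metis (mono_tags, lifting) LeastI)
  have jbelow: "k r \<le> l r" if "i < r" "r < j" for r
    using not_less_Least[of r "\<lambda>r. i < r \<and> r \<le> n \<and> l r < k r"] that jP
    unfolding j_def[symmetric] by auto
  define j' where "j' = (GREATEST r. r \<le> n \<and> k r = k j)"
  have j'P: "j' \<le> n \<and> k j' = k j"
    unfolding j'_def by (rule GreatestI_nat[of _ j n]) (use jP in auto)
  have jj': "j \<le> j'"
    unfolding j'_def by (rule Greatest_le_nat[of _ j n]) (use jP in auto)
  have above: "k r < k j" if "j' < r" "r \<le> n" for r
  proof -
    have "k r \<le> k j" using sk[of j r] jP iP that jj' by auto
    moreover have "k r \<noteq> k j"
    proof
      assume "k r = k j"
      then have "r \<le> j'" unfolding j'_def by (intro Greatest_le_nat[of _ r n]) (use that in auto)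
      then show False using that by simp
    qed
    ultimately show ?thesis by simp
  qed
  have block: "k r = k j" if "j \<le> r" "r \<le> j'" for r
    using sk[of j r] sk[of r j'] j'P jP iP that by force
  have H: "x < j' \<longrightarrow> PS l j' - PS k j' + 1 \<le> PS l x - PS k x" if jx: "j \<le> x" "x \<le> j'" for x
    using jx(2)
  proof (induction x rule: inc_induct)
    case base
    then show ?case by simp
  next
    case (step m)
    have "l (Suc m) \<le> l j" using sl[of j "Suc m"] jP iP step j'P jx by auto
    moreover have "k (Suc m) = k j" using block[of "Suc m"] step jx by auto
    ultimately have "l (Suc m) < k (Suc m)" using jP by auto
    show ?case
    proof (cases "Suc m < j'")
      case True
      then show ?thesis using step \<open>l (Suc m) < k (Suc m)\<close> by auto
    next
      case False
      then have "j' = Suc m" using step by auto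
      then show ?thesis using \<open>l (Suc m) < k (Suc m)\<close> by simp
    qed
  qed
  have strict: "PS k m + 1 \<le> PS l m" if "i \<le> m" "m < j'" for m
  proof (cases "m < j")
    case True
    then show ?thesis using G[OF that(1)] jbelow by auto
  next
    case False
    then show ?thesis using H[of m] that E[of j'] j'P by auto
  qed
  have kj1: "1 \<le> k j'" using j'P jP by auto
  have kji: "k j' \<le> k i" using sk[of i j'] iP jP jj' j'P by auto
  let ?k' = "k(i := k i + 1, j' := k j' - 1)"
  have ij': "i < j'" using jP jj' by auto
  have PSk': "PS ?k' m = PS k m + of_bool (i \<le> m) - of_bool (j' \<le> m)" for m
    using iP ij' kj1 by (intro PS_upd) auto
  show ?thesis
  proof (rule that[of i j'])
    show "1 \<le> i" "i < j'" "j' \<le> n" "1 \<le> k j'" "k j' \<le> k i"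
      using iP ij' j'P kj1 kji by auto
  next
    fix r s assume rs: "1 \<le> r" "r \<le> s" "s \<le> n"
    have A: "k i + 1 \<le> k r" if "r < i"
      using below[of r] sl[of r i] kli rs that iP by auto
    have B: "k s + 1 \<le> k j'" if "j' < s"
      using above[of s] rs that j'P by auto
    show "?k' s \<le> ?k' r"
      using A B sk[of r s] rs ij' kji kj1 by auto
  next
    fix m assume m: "m \<le> n"
    show "PS ?k' m \<le> PS l m"
      unfolding PSk' using strict[of m] E[OF m] ij' by (cases "i \<le> m"; cases "j' \<le> m") auto
  next
    show "PS ?k' n = PS l n" unfolding PSk' using En iP j'P by auto
  next
    show "Dist l n ?k' < Dist l n k" unfolding Dist_def
    proof (rule sum_strict_mono_ex1)
      show "\<forall>m\<in>{1..n}. nat (PS l m - PS ?k' m) \<le> nat (PS l m - PS k m)"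
        unfolding PSk' using ij' by auto
      show "\<exists>m\<in>{1..n}. nat (PS l m - PS ?k' m) < nat (PS l m - PS k m)"
        using iP strict[of i] ij' unfolding PSk' by (intro bexI[of _ i]) auto
    qed auto
  qed
qed


lemma main_ind:
  fixes a :: real
  assumes a: "0 < a" "a < 1"
    and sl: "\<And>i j. 1 \<le> i \<Longrightarrow> i \<le> j \<Longrightarrow> j \<le> n \<Longrightarrow> l j \<le> l i"
  shows "\<forall>k. Dist l n k = d \<longrightarrow> (\<forall>i j. 1 \<le> i \<longrightarrow> i \<le> j \<longrightarrow> j \<le> n \<longrightarrow> k j \<le> k i)
     \<longrightarrow> (\<forall>m\<le>n. PS k m \<le> PS l m) \<longrightarrow> PS k n = PS l n
     \<longrightarrow> TT {1..n} (\<lambda>r. a ^ k r) M \<le> TT {1..n} (\<lambda>r. a ^ l r) M"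
proof (induction d rule: less_induct)
  case (less d)
  show ?case
  proof (intro allI impI)
    fix k assume D: "Dist l n k = d"
      and sk: "\<forall>i j. 1 \<le> i \<longrightarrow> i \<le> j \<longrightarrow> j \<le> n \<longrightarrow> k j \<le> k i"
      and E: "\<forall>m\<le>n. PS k m \<le> PS l m" and En: "PS k n = PS l n"
    show "TT {1..n} (\<lambda>r. a ^ k r) M \<le> TT {1..n} (\<lambda>r. a ^ l r) M"
    proof (cases "\<exists>r\<in>{1..n}. k r \<noteq> l r")
      case False
      then have "TT {1..n} (\<lambda>r. a ^ k r) M = TT {1..n} (\<lambda>r. a ^ l r) M"
        by (intro TT_cong) auto
      then show ?thesis by simp
    next
      case True
      obtain i j where ij: "1 \<le> i" "i < j" "j \<le> n" "1 \<le> k j" "k j \<le> k i"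
        and s': "\<And>r s. 1 \<le> r \<Longrightarrow> r \<le> s \<Longrightarrow> s \<le> n \<Longrightarrow>
          (k(i := k i + 1, j := k j - 1)) s \<le> (k(i := k i + 1, j := k j - 1)) r"
        and E': "\<And>m. m \<le> n \<Longrightarrow> PS (k(i := k i + 1, j := k j - 1)) m \<le> PS l m"
        and En': "PS (k(i := k i + 1, j := k j - 1)) n = PS l n"
        and D': "Dist l n (k(i := k i + 1, j := k j - 1)) < Dist l n k"
        by (rule step[of n k l]) (use sk sl E En True in auto)
      have "TT {1..n} (\<lambda>r. a ^ k r) M \<le> TT {1..n} (\<lambda>r. a ^ (k(i := k i + 1, j := k j - 1)) r) M"
        by (rule transfer_le) (use a ij in auto)
      also have "\<dots> \<le> TT {1..n} (\<lambda>r. a ^ l r) M"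
        using less.IH[of "Dist l n (k(i := k i + 1, j := k j - 1))"] D D' s' E' En' by blast
      finally show ?thesis .
    qed
  qed
qed

theorem mainTheorem4:
  fixes a :: real and k l :: "nat \<Rightarrow> nat" and n :: nat and M :: int
  assumes "0 < a" and "a < 1"
    and "\<And>i j. 1 \<le> i \<Longrightarrow> i \<le> j \<Longrightarrow> j \<le> n \<Longrightarrow> k j \<le> k i"
    and "\<And>i j. 1 \<le> i \<Longrightarrow> i \<le> j \<Longrightarrow> j \<le> n \<Longrightarrow> l j \<le> l i"
    and "\<And>j. j \<le> n \<Longrightarrow> (\<Sum>i=1..j. k i) \<le> (\<Sum>i=1..j. l i)"
    and "(\<Sum>i=1..n. k i) = (\<Sum>i=1..n. l i)"
  shows "sum_tail_prob a k n M \<le> sum_tail_prob a l n M"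
proof -
  have PSn: "PS f m = int (\<Sum>i=1..m. f i)" for f m
    unfolding PS_def by simp
  have st: "sum_tail_prob a f n M = TT {1..n} (\<lambda>r. a ^ f r) M" for f
    unfolding sum_tail_prob_def indicator_vector_def TT_def ..
  have mi: "\<forall>k'. Dist l n k' = Dist l n k \<longrightarrow> (\<forall>i j. 1 \<le> i \<longrightarrow> i \<le> j \<longrightarrow> j \<le> n \<longrightarrow> k' j \<le> k' i)
     \<longrightarrow> (\<forall>m\<le>n. PS k' m \<le> PS l m) \<longrightarrow> PS k' n = PS l n
     \<longrightarrow> TT {1..n} (\<lambda>r. a ^ k' r) M \<le> TT {1..n} (\<lambda>r. a ^ l r) M"
    by (rule main_ind) (use assms(1,2,4) in auto)
  have "PS k m \<le> PS l m" if "m \<le> n" for m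
    unfolding PSn using assms(5)[OF that] by linarith
  moreover have "PS k n = PS l n" unfolding PSn using assms(6) by simp
  ultimately show ?thesis unfolding st
    using mi assms(3) by blast
qed

end
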